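(* Let $\mathcal H$ be a Hilbert space, $(\mathsf H_t)_{t\ge0}$ a strongly continuous semigroup of symmetric operators on $\mathcal H$, $L$ its generator with domain $\mathcal D(L)$, and $\mathbb H_t(u)=(\mathsf H_tu,u)_{\mathcal H}$. Then: (i) if $u\in\mathcal D(L)$, then $\limsup_{t\to0^+}\frac{\mathbb H_0(u)-\mathbb H_t(u)}{t}\le(-Lu,u)_{\mathcal H}$; (ii) if $(t_k)\subset(0,\infty)$ is infinitesimal and $(u_k)\subset\mathcal H$ satisfies $u_k\to u$ in $\mathcal H$ for some $u\in\mathcal D(L)$, then $\liminf_{k\to\infty}\frac{\mathbb H_0(u_k)-\mathbb H_{t_k}(u_k)}{t_k}\ge(-Lu,u)_{\mathcal H}$. Consequently, the functionals $u\mapsto\frac{\mathbb H_0(u)-\mathbb H_t(u)}{t}$ converge as $t\to0^+$ to $u\mapsto(-Lu,u)_{\mathcal H}$ on $\mathcal D(L)$ pointwise and in the $\Gamma$-sense with respect to the strong topology of $\mathcal H$.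
   Context: A strongly continuous semigroup of symmetric operators on $\mathcal H$ is a family $(\mathsf H_t)_{t\ge0}$ of bounded self-adjoint operators with $\mathsf H_0=\mathrm{Id}$, $\mathsf H_{t+s}=\mathsf H_t\mathsf H_s$, $\|\mathsf H_tu\|\le\|u\|$, and $\mathsf H_tu\to u$ as $t\to0^+$ for every $u$. The generator is $Lu=\lim_{t\to0^+}(\mathsf H_tu-u)/t$ (strong limit), with $\mathcal D(L)$ the set of $u$ for which the limit exists. $\Gamma$-convergence on $\mathcal D(L)$: for every infinitesimal $(t_k)$, the liminf inequality of (ii) holds, and for every $u\in\mathcal D(L)$ there are $u_k\in\mathcal D(L)$, $u_k\to u$, with $\limsup$ of the functionals at $(t_k,u_k)$ at most $(-Lu,u)_{\mathcal H}$. *)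

theory Defs
  imports "HOL-Analysis.Analysis"
begin

text \<open>Strongly continuous semigroup of symmetric (bounded self-adjoint) contractions
  on a real Hilbert space. Only the values H t for t \<ge> 0 matter.\<close>
definition sym_semigroup :: "(real \<Rightarrow> 'a::{real_inner,complete_space} \<Rightarrow> 'a) \<Rightarrow> bool" where
  "sym_semigroup H \<longleftrightarrow>
     (\<forall>t\<ge>0. bounded_linear (H t)) \<and>
     (\<forall>t\<ge>0. \<forall>u v. inner (H t u) v = inner u (H t v)) \<and>
     (\<forall>u. H 0 u = u) \<and>
     (\<forall>t s. t \<ge> 0 \<longrightarrow> s \<ge> 0 \<longrightarrow> H (t + s) = H t \<circ> H s) \<and>
     (\<forall>t\<ge>0. \<forall>u. norm (H t u) \<le> norm u) \<and>
     (\<forall>u. ((\<lambda>t. H t u) \<longlongrightarrow> u) (at_right 0))"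

definition gen_domain :: "(real \<Rightarrow> 'a::real_normed_vector \<Rightarrow> 'a) \<Rightarrow> 'a set" where
  "gen_domain H = {u. \<exists>l. ((\<lambda>t. (H t u - u) /\<^sub>R t) \<longlongrightarrow> l) (at_right 0)}"

definition generator :: "(real \<Rightarrow> 'a::real_normed_vector \<Rightarrow> 'a) \<Rightarrow> 'a \<Rightarrow> 'a" where
  "generator H u = Lim (at_right 0) (\<lambda>t. (H t u - u) /\<^sub>R t)"

definition quad_form :: "(real \<Rightarrow> 'a::real_inner \<Rightarrow> 'a) \<Rightarrow> real \<Rightarrow> 'a \<Rightarrow> real" where
  "quad_form H t u = inner (H t u) u"

definition gamma_conv_right0 ::
  "(real \<Rightarrow> 'a::real_normed_vector \<Rightarrow> real) \<Rightarrow> ('a \<Rightarrow> real) \<Rightarrow> 'a set \<Rightarrow> bool" where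
  "gamma_conv_right0 F G D \<longleftrightarrow>
     (\<forall>t :: nat \<Rightarrow> real. (\<forall>k. t k > 0) \<and> t \<longlonglongrightarrow> 0 \<longrightarrow>
        (\<forall>u\<in>D. \<forall>uk :: nat \<Rightarrow> 'a. uk \<longlonglongrightarrow> u \<longrightarrow>
            Liminf sequentially (\<lambda>k. ereal (F (t k) (uk k))) \<ge> ereal (G u)) \<and>
        (\<forall>u\<in>D. \<exists>uk :: nat \<Rightarrow> 'a. (\<forall>k. uk k \<in> D) \<and> uk \<longlonglongrightarrow> u \<and>
            Limsup sequentially (\<lambda>k. ereal (F (t k) (uk k))) \<le> ereal (G u)))"

end

theory Submission
  imports Defs
begin

lemma key_ineq:
  fixes A :: "'a::real_inner \<Rightarrow> 'a"
  assumes bl: "bounded_linear A" and sym: "\<And>u v. inner (A u) v = inner u (A v)"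
    and contr: "\<And>u. norm (A u) \<le> norm u"
  shows "inner (v - A v) v \<ge> 2 * inner v (u - A u) - inner (u - A u) u"
proof -
  interpret bounded_linear A by (rule bl)
  have "inner (A (v - u)) (v - u) \<le> norm (A (v - u)) * norm (v - u)"
    by (rule norm_cauchy_schwarz)
  also have "\<dots> \<le> norm (v - u) * norm (v - u)"
    by (simp add: contr mult_right_mono)
  also have "\<dots> = inner (v - u) (v - u)" by (simp add: power2_eq_square[symmetric] power2_norm_eq_inner)
  finally have 0: "inner (A (v - u)) (v - u) \<le> inner (v - u) (v - u)" .
  have s: "inner (A v) u = inner v (A u)" by (rule sym)
  have s2: "inner (A u) v = inner u (A v)" by (rule sym)
  show ?thesis using 0 s s2
    by (simp add: diff inner_diff_left inner_diff_right inner_commute algebra_simps)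
qed

theorem theorem1p8:
  fixes H :: "real \<Rightarrow> 'a::{real_inner,complete_space} \<Rightarrow> 'a"
  assumes "sym_semigroup H"
  shows "(\<forall>u\<in>gen_domain H.
            Limsup (at_right 0) (\<lambda>t. ereal ((quad_form H 0 u - quad_form H t u) / t))
              \<le> ereal (inner (- generator H u) u))
       \<and> (\<forall>(t :: nat \<Rightarrow> real) (uk :: nat \<Rightarrow> 'a) u.
            (\<forall>k. t k > 0) \<longrightarrow> t \<longlonglongrightarrow> 0 \<longrightarrow> uk \<longlonglongrightarrow> u \<longrightarrow> u \<in> gen_domain H \<longrightarrow>
            Liminf sequentially
              (\<lambda>k. ereal ((quad_form H 0 (uk k) - quad_form H (t k) (uk k)) / t k))
              \<ge> ereal (inner (- generator H u) u))
       \<and> (\<forall>u\<in>gen_domain H.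
            ((\<lambda>t. (quad_form H 0 u - quad_form H t u) / t)
               \<longlongrightarrow> inner (- generator H u) u) (at_right 0))
       \<and> gamma_conv_right0 (\<lambda>t u. (quad_form H 0 u - quad_form H t u) / t)
           (\<lambda>u. inner (- generator H u) u) (gen_domain H)"
proof -
  note S = assms[unfolded sym_semigroup_def]
  have H0: "\<And>u. H 0 u = u" using S by blast
  have gen: "((\<lambda>t. (H t u - u) /\<^sub>R t) \<longlongrightarrow> generator H u) (at_right 0)"
    if ud0: "u \<in> gen_domain H" for u
  proof -
    obtain l where l: "((\<lambda>t. (H t u - u) /\<^sub>R t) \<longlongrightarrow> l) (at_right 0)"
      using ud0 unfolding gen_domain_def by blast
    moreover have "Lim (at_right (0::real)) (\<lambda>t. (H t u - u) /\<^sub>R t) = l"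
      by (rule tendsto_Lim[OF trivial_limit_at_right_real l])
    ultimately show ?thesis unfolding generator_def by simp
  qed
  have eqQ: "(quad_form H 0 u - quad_form H t u) / t = inner (- ((H t u - u) /\<^sub>R t)) u"
    if "t > 0" for t u
    using that by (simp add: quad_form_def H0 inner_diff_left algebra_simps divide_simps)
  have pw: "((\<lambda>t. (quad_form H 0 u - quad_form H t u) / t)
               \<longlongrightarrow> inner (- generator H u) u) (at_right 0)"
    if "u \<in> gen_domain H" for u
  proof -
    have "((\<lambda>t. inner (- ((H t u - u) /\<^sub>R t)) u) \<longlongrightarrow> inner (- generator H u) u) (at_right 0)"
      by (intro tendsto_intros gen that)
    moreover have "eventually (\<lambda>t. inner (- ((H t u - u) /\<^sub>R t)) u
                     = (quad_form H 0 u - quad_form H t u) / t) (at_right 0)"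
      using eventually_at_right_less[of 0] by eventually_elim (simp only: eqQ)
    ultimately show ?thesis by (rule Lim_transform_eventually)
  qed
  have seqlim: "filterlim t (at_right 0) sequentially"
    if "\<forall>k. t k > 0" "t \<longlonglongrightarrow> 0" for t :: "nat \<Rightarrow> real"
    using that by (simp add: filterlim_at less_imp_neq[symmetric])
  have liminf: "Liminf sequentially
              (\<lambda>k. ereal ((quad_form H 0 (uk k) - quad_form H (t k) (uk k)) / t k))
              \<ge> ereal (inner (- generator H u) u)"
    if tp: "\<forall>k. t k > 0" and t0: "t \<longlonglongrightarrow> 0" and uk: "uk \<longlonglongrightarrow> u" and ud: "u \<in> gen_domain H"
    for t uk u
  proof -
    define g where "g k = 2 * inner (uk k) (- ((H (t k) u - u) /\<^sub>R t k))
        - inner (- ((H (t k) u - u) /\<^sub>R t k)) u" for k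
    have gl: "((\<lambda>k. (H (t k) u - u) /\<^sub>R t k) \<longlongrightarrow> generator H u) sequentially"
      using filterlim_compose[OF gen[OF ud] seqlim[OF tp t0]] by simp
    have "g \<longlonglongrightarrow> 2 * inner u (- generator H u) - inner (- generator H u) u"
      unfolding g_def by (intro tendsto_intros gl uk)
    moreover have "2 * inner u (- generator H u) - inner (- generator H u) u = inner (- generator H u) u"
      by (simp add: inner_commute)
    ultimately have glim: "g \<longlonglongrightarrow> inner (- generator H u) u" by metis
    have ge: "g k \<le> (quad_form H 0 (uk k) - quad_form H (t k) (uk k)) / t k" for k
    proof -
      have tk: "t k > 0" using tp by blast
      have bl: "bounded_linear (H (t k))" using S tk by auto
      have sy: "\<And>a b. inner (H (t k) a) b = inner a (H (t k) b)" using S tk by auto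
      have co: "\<And>a. norm (H (t k) a) \<le> norm a" using S tk by auto
      have K: "inner (uk k - H (t k) (uk k)) (uk k)
          \<ge> 2 * inner (uk k) (u - H (t k) u) - inner (u - H (t k) u) u"
        by (rule key_ineq[OF bl sy co])
      have "g k = (2 * inner (uk k) (u - H (t k) u) - inner (u - H (t k) u) u) / t k"
        unfolding g_def using tk
        by (simp add: inner_diff_left inner_diff_right divide_simps algebra_simps)
      also have "\<dots> \<le> inner (uk k - H (t k) (uk k)) (uk k) / t k"
        using K tk by (simp add: divide_right_mono)
      also have "\<dots> = (quad_form H 0 (uk k) - quad_form H (t k) (uk k)) / t k"
        by (simp add: quad_form_def H0 inner_diff_left)
      finally show ?thesis .
    qed
    have "ereal (inner (- generator H u) u) = Liminf sequentially (\<lambda>k. ereal (g k))"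
      by (rule lim_imp_Liminf[OF sequentially_bot tendsto_ereal[OF glim], symmetric])
    also have "\<dots> \<le> Liminf sequentially
              (\<lambda>k. ereal ((quad_form H 0 (uk k) - quad_form H (t k) (uk k)) / t k))"
      by (intro Liminf_mono) (simp add: ge)
    finally show ?thesis .
  qed
  have part1: "Limsup (at_right 0) (\<lambda>t. ereal ((quad_form H 0 u - quad_form H t u) / t))
              \<le> ereal (inner (- generator H u) u)" if "u \<in> gen_domain H" for u
    using lim_imp_Limsup[OF trivial_limit_at_right_real tendsto_ereal[OF pw[OF that]]] by simp
  have gam: "gamma_conv_right0 (\<lambda>t u. (quad_form H 0 u - quad_form H t u) / t)
           (\<lambda>u. inner (- generator H u) u) (gen_domain H)"
    unfolding gamma_conv_right0_def
  proof (intro allI impI conjI ballI)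
    fix t :: "nat \<Rightarrow> real" and u and uk :: "nat \<Rightarrow> 'a"
    assume a: "(\<forall>k. 0 < t k) \<and> t \<longlonglongrightarrow> 0" "u \<in> gen_domain H" "uk \<longlonglongrightarrow> u"
    then show "ereal (inner (- generator H u) u)
      \<le> Liminf sequentially (\<lambda>k. ereal ((quad_form H 0 (uk k) - quad_form H (t k) (uk k)) / t k))"
      using liminf by blast
  next
    fix t :: "nat \<Rightarrow> real" and u
    assume a: "(\<forall>k. 0 < t k) \<and> t \<longlonglongrightarrow> 0" "u \<in> gen_domain H"
    have "((\<lambda>k. (quad_form H 0 u - quad_form H (t k) u) / t k) \<longlongrightarrow> inner (- generator H u) u) sequentially"
      using filterlim_compose[OF pw[OF a(2)] seqlim] a(1) by simp
    then have "Limsup sequentially (\<lambda>k. ereal ((quad_form H 0 u - quad_form H (t k) u) / t k))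
        = ereal (inner (- generator H u) u)"
      by (rule lim_imp_Limsup[OF sequentially_bot tendsto_ereal])
    then show "\<exists>uk. (\<forall>k. uk k \<in> gen_domain H) \<and> uk \<longlonglongrightarrow> u \<and>
      Limsup sequentially (\<lambda>k. ereal ((quad_form H 0 (uk k) - quad_form H (t k) (uk k)) / t k))
        \<le> ereal (inner (- generator H u) u)"
      using a(2) by (intro exI[of _ "\<lambda>k. u"]) auto
  qed
  show ?thesis using part1 liminf pw gam by blast
qed

end
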